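(* Assume the hypothesis (H3) below holds. Then for any $v\in V_0(E)$ and any finite configuration $\xi$, the function $t\mapsto H_t(\xi)=\dfrac{\det J(\phi^v_t(\xi))}{\det J(\xi)}$ is differentiable and, for $T>0$, $$\sup_{|t|\le T}\Big|\frac{\mathrm dH_t(\xi)}{\mathrm dt}\Big|\le\frac{u_{|\xi|}}{\det J(\xi)},$$ where $(u_n,\,n\ge0)$ is a sequence of nonnegative numbers satisfying $\sum_n\frac{u_n}{n!}|x|^n<\infty$ for all $x\in\mathbb R$.
   Context: $E$ is a domain of $\mathbb R^d$ with Radon measure $\lambda$; $K$ is a bounded symmetric Hilbert–Schmidt integral operator on $L^2(E,\lambda)$, kernel $K(x,y)$, spectrum in $[0,1)$, locally trace class; $\Lambda$ is a fixed compact set and $J(x,y)$ is the kernel of $J_{\Lambda,-1}=(I-K_\Lambda)^{-1}K_\Lambda$, $K_\Lambda=P_\Lambda KP_\Lambda$. For $\xi=\{x_1,\dots,x_n\}$, $\det J(\xi)=\det(J(x_i,x_k))_{i,k}$ and $|\xi|=n$; $U(\xi)=-\log\det J(\xi)$. $V_0(E)$: smooth compactly supported vector fields; $\phi^v_t$ the flow of $v$, acting on configurations atom by atom. $\nabla_vU(\xi)=\frac{\mathrm d}{\mathrm dt}U(\phi^v_t(\xi))|_{t=0}$. Hypothesis (H3): $U$ is differentiable at every finite configuration, and for any $v\in V_0(E)$ there is $c>0$ such that for all finite $\xi$, $|\nabla_vU(\xi)|\le u_{|\xi|}/\det J(\xi)$ with $u_n=c\,n^{n/2}$ (a sequence with $\sum_n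 u_n|x|^n/n!<\infty$ for all $x$). *)

theory Defs
  imports "HOL-Analysis.Analysis"
begin

text \<open>det J(xi): determinant of the matrix (J(x_i,x_k)) indexed by the points of the
  finite configuration xi (Leibniz formula; independent of any enumeration).\<close>
definition detJ :: "('a \<Rightarrow> 'a \<Rightarrow> real) \<Rightarrow> 'a set \<Rightarrow> real" where
  "detJ J \<xi> = (\<Sum>p\<in>{p. p permutes \<xi>}. of_int (sign p) * (\<Prod>x\<in>\<xi>. J x (p x)))"

definition Upot :: "('a \<Rightarrow> 'a \<Rightarrow> real) \<Rightarrow> 'a set \<Rightarrow> real" where
  "Upot J \<xi> = - ln (detJ J \<xi>)"

fun iter_dderiv :: "('a::real_normed_vector \<Rightarrow> 'b::real_normed_vector) \<Rightarrow> 'a list \<Rightarrow> 'a \<Rightarrow> 'b" where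
  "iter_dderiv f [] = f"
| "iter_dderiv f (u # us) = (\<lambda>x. frechet_derivative (iter_dderiv f us) (at x) u)"

definition smooth_fun :: "('a::real_normed_vector \<Rightarrow> 'b::real_normed_vector) \<Rightarrow> bool" where
  "smooth_fun f \<longleftrightarrow> (\<forall>us x. iter_dderiv f us differentiable (at x))"

definition V0 :: "'a::euclidean_space set \<Rightarrow> ('a \<Rightarrow> 'a) set" where
  "V0 E = {v. smooth_fun v \<and> compact (closure {x. v x \<noteq> 0}) \<and> closure {x. v x \<noteq> 0} \<subseteq> E}"

definition flow :: "('a::euclidean_space \<Rightarrow> 'a) \<Rightarrow> real \<Rightarrow> 'a \<Rightarrow> 'a" where
  "flow v t x = (THE \<gamma>. \<gamma> 0 = x \<and> (\<forall>s. (\<gamma> has_vector_derivative v (\<gamma> s)) (at s))) t"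

definition flow_conf :: "('a::euclidean_space \<Rightarrow> 'a) \<Rightarrow> real \<Rightarrow> 'a set \<Rightarrow> 'a set" where
  "flow_conf v t \<xi> = flow v t ` \<xi>"

definition gradU :: "('a \<Rightarrow> 'a \<Rightarrow> real) \<Rightarrow> ('a::euclidean_space \<Rightarrow> 'a) \<Rightarrow> 'a set \<Rightarrow> real" where
  "gradU J v \<xi> = deriv (\<lambda>t. Upot J (flow_conf v t \<xi>)) 0"

definition Hfun :: "('a \<Rightarrow> 'a \<Rightarrow> real) \<Rightarrow> ('a::euclidean_space \<Rightarrow> 'a) \<Rightarrow> 'a set \<Rightarrow> real \<Rightarrow> real" where
  "Hfun J v \<xi> t = detJ J (flow_conf v t \<xi>) / detJ J \<xi>"

text \<open>Hypothesis (H3). U is (finite, i.e. det J > 0, and) differentiable at every finite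
  configuration (along flows of fields in V_0(E)), and the gradient bound holds with
  u_n = c n^(n/2).\<close>
definition H3 :: "'a::euclidean_space set \<Rightarrow> ('a \<Rightarrow> 'a \<Rightarrow> real) \<Rightarrow> bool" where
  "H3 E J \<longleftrightarrow>
     (\<forall>\<xi>. finite \<xi> \<and> \<xi> \<subseteq> E \<longrightarrow> detJ J \<xi> > 0)
   \<and> (\<forall>v\<in>V0 E. \<forall>\<xi>. finite \<xi> \<and> \<xi> \<subseteq> E \<longrightarrow>
        (\<lambda>t. Upot J (flow_conf v t \<xi>)) differentiable (at 0))
   \<and> (\<forall>v\<in>V0 E. \<exists>c>0. \<forall>\<xi>. finite \<xi> \<and> \<xi> \<subseteq> E \<longrightarrow>
        \<bar>gradU J v \<xi>\<bar> \<le> c * sqrt (real (card \<xi>)) ^ card \<xi> / detJ J \<xi>)"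

end

theory Submission
  imports Defs
begin


fun picard :: "('a::euclidean_space \<Rightarrow> 'a) \<Rightarrow> 'a \<Rightarrow> nat \<Rightarrow> real \<Rightarrow> 'a" where
  "picard f x0 0 = (\<lambda>t. x0)"
| "picard f x0 (Suc k) = (\<lambda>t. x0 + integral {0..t} (\<lambda>s. f (picard f x0 k s)))"

lemma lip_cont:
  fixes f :: "'a::real_normed_vector \<Rightarrow> 'b::real_normed_vector"
  assumes lip: "\<And>x y. norm (f x - f y) \<le> L * norm (x - y)" and L: "L \<ge> 0"
  shows "continuous_on UNIV f"
  by (rule lipschitz_on_continuous_on[of L]) (auto intro!: lipschitz_onI simp: dist_norm lip L)

lemma picard_cont:
  assumes cf: "continuous_on UNIV f"
  shows "continuous_on {0..b} (picard f x0 k)"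
proof (induction k)
  case 0 show ?case by simp
next
  case (Suc k)
  have c: "continuous_on {0..b} (\<lambda>s. f (picard f x0 k s))"
    using continuous_on_compose2[OF cf Suc.IH] by auto
  show ?case
    unfolding picard.simps
    apply (rule continuous_on_add[OF continuous_on_const])
    using integral_has_vector_derivative[OF c] has_vector_derivative_continuous continuous_on_eq_continuous_within by blast
qed

lemma picard_int:
  assumes cf: "continuous_on UNIV f"
  shows "(\<lambda>s. f (picard f x0 k s)) integrable_on {0..t}"
  by (rule integrable_continuous_real, rule continuous_on_compose2[OF cf picard_cont[OF cf]]) auto

lemma int_pow:
  assumes "(t::real) \<ge> 0"
  shows "((\<lambda>s. s^n) has_integral t^(Suc n)/ real (Suc n)) {0..t}"
proof -
  have "((\<lambda>s. s^n) has_integral ((\<lambda>s. s^(Suc n)/ real (Suc n)) t - (\<lambda>s. s^(Suc n)/ real (Suc n)) 0)) {0..t}"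
    apply (rule fundamental_theorem_of_calculus[OF assms])
    apply (auto simp: has_real_derivative_iff_has_vector_derivative[symmetric] intro!: derivative_eq_intros)
    apply (cases n) apply (auto simp: field_simps)
    done
  then show ?thesis by simp
qed

lemma picard_diff_bound:
  fixes f :: "'a::euclidean_space \<Rightarrow> 'a"
  assumes cf: "continuous_on UNIV f" and lip: "\<And>x y. norm (f x - f y) \<le> L * norm (x - y)" and L: "L \<ge> 0"
    and bnd: "\<And>x. norm (f x) \<le> M"
  shows "t \<ge> 0 \<Longrightarrow> norm (picard f x0 (Suc k) t - picard f x0 k t) \<le> M * L^k * t^(Suc k) / fact (Suc k)"
proof (induction k arbitrary: t)
  case 0
  have "norm (integral {0..t} (\<lambda>s. f x0)) \<le> integral {0..t} (\<lambda>s. M)"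
    by (rule integral_norm_bound_integral) (auto simp: bnd)
  then show ?case using 0 by (simp add: mult.commute)
next
  case (Suc k)
  let ?g = "\<lambda>s. f (picard f x0 (Suc k) s) - f (picard f x0 k s)"
  let ?h = "\<lambda>s. (L * M * L^k / fact (Suc k)) * s^(Suc k)"
  have d: "integral {0..t} ?g = integral {0..t} (\<lambda>s. f (picard f x0 (Suc k) s)) - integral {0..t} (\<lambda>s. f (picard f x0 k s))"
    by (rule integral_diff; rule picard_int[OF cf])
  have eq: "picard f x0 (Suc (Suc k)) t - picard f x0 (Suc k) t = integral {0..t} ?g"
    unfolding d by (simp only: picard.simps(2)) simp
  have "norm (integral {0..t} ?g) \<le> integral {0..t} ?h"
  proof (rule integral_norm_bound_integral)
    show "?g integrable_on {0..t}" by (intro integrable_diff picard_int[OF cf])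
    show "?h integrable_on {0..t}" by (intro integrable_continuous_real continuous_intros)
    fix s assume s: "s \<in> {0..t}"
    have "norm (?g s) \<le> L * norm (picard f x0 (Suc k) s - picard f x0 k s)" by (rule lip)
    also have "\<dots> \<le> L * (M * L^k * s^(Suc k) / fact (Suc k))"
      using mult_left_mono[OF Suc.IH[of s] L] s by auto
    finally show "norm (?g s) \<le> ?h s" by (simp add: field_simps)
  qed
  also have "integral {0..t} ?h = (L * M * L^k / fact (Suc k)) * (t^(Suc (Suc k)) / real (Suc (Suc k)))"
    using has_integral_mult_right[OF int_pow[OF Suc.prems, of "Suc k"], of "L * M * L^k / fact (Suc k)"]
    by (rule integral_unique)
  also have "\<dots> = M * L^(Suc k) * t^(Suc (Suc k)) / fact (Suc (Suc k))"
    by (simp add: field_simps)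
  finally show ?case using eq by simp
qed

lemma picard_conv:
  fixes f :: "'a::euclidean_space \<Rightarrow> 'a"
  assumes cf: "continuous_on UNIV f" and lip: "\<And>x y. norm (f x - f y) \<le> L * norm (x - y)" and L: "L > 0"
    and bnd: "\<And>x. norm (f x) \<le> M" and t: "t \<ge> 0"
  shows "convergent (\<lambda>k. picard f x0 k t)"
proof -
  let ?d = "\<lambda>j. picard f x0 (Suc j) t - picard f x0 j t"
  have s1: "summable (\<lambda>j. inverse (fact (Suc j)) * (L*t)^(Suc j))"
    using summable_exp[of "L*t"] by (subst summable_Suc_iff)
  have s2: "summable (\<lambda>j. M * L^j * t^(Suc j) / fact (Suc j))"
  proof -
    have "summable (\<lambda>j. (M / L) * (inverse (fact (Suc j)) * (L*t)^(Suc j)))"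
      by (rule summable_mult[OF s1])
    moreover have "(\<lambda>j. (M / L) * (inverse (fact (Suc j)) * (L*t)^(Suc j))) = (\<lambda>j. M * L^j * t^(Suc j) / fact (Suc j))"
    proof
      fix j
      have e: "(L*t)^(Suc j) = L * (L^j * t^(Suc j))" by (simp add: power_mult_distrib)
      show "(M / L) * (inverse (fact (Suc j)) * (L*t)^(Suc j)) = M * L^j * t^(Suc j) / fact (Suc j)"
        unfolding e using L by (simp add: divide_inverse)
    qed
    ultimately show ?thesis by simp
  qed
  have "summable ?d"
  proof (rule summable_comparison_test[OF _ s2])
    show "\<exists>N. \<forall>n\<ge>N. norm (?d n) \<le> M * L^n * t^(Suc n) / fact (Suc n)"
      using picard_diff_bound[OF cf lip _ bnd t] L by (intro exI[of _ 0]) simp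
  qed
  then have "(\<lambda>k. \<Sum>j<k. ?d j) \<longlonglongrightarrow> suminf ?d" by (rule summable_LIMSEQ)
  moreover have "(\<Sum>j<k. ?d j) = picard f x0 k t - x0" for k
    by (subst sum_lessThan_telescope) simp
  ultimately have "(\<lambda>k. picard f x0 k t - x0) \<longlonglongrightarrow> suminf ?d" by simp
  then have "(\<lambda>k. (picard f x0 k t - x0) + x0) \<longlonglongrightarrow> suminf ?d + x0" by (intro tendsto_intros)
  then show ?thesis unfolding convergent_def by auto
qed

lemma picard_zero: "picard f x0 k 0 = x0"
  by (cases k) auto

lemma ode_forward:
  fixes f :: "'a::euclidean_space \<Rightarrow> 'a"
  assumes lip: "\<And>x y. norm (f x - f y) \<le> L * norm (x - y)" and L: "L > 0"
    and bnd: "\<And>x. norm (f x) \<le> M"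
  shows "\<exists>\<gamma>. \<gamma> 0 = x0 \<and> (\<forall>t\<ge>0. (\<gamma> has_vector_derivative f (\<gamma> t)) (at t within {0..}))"
proof -
  have cf: "continuous_on UNIV f" using lip_cont[OF lip] L by auto
  have M: "M \<ge> 0" using bnd[of 0] norm_ge_zero[of "f 0"] by linarith
  define \<gamma> where "\<gamma> t = lim (\<lambda>k. picard f x0 k t)" for t
  have lim: "(\<lambda>k. picard f x0 k t) \<longlonglongrightarrow> \<gamma> t" if "t \<ge> 0" for t
    unfolding \<gamma>_def using picard_conv[OF cf lip L bnd that] convergent_LIMSEQ_iff by blast
  have g0: "\<gamma> 0 = x0" using lim[of 0] by (simp add: picard_zero LIMSEQ_const_iff)
  have eqn: "(\<lambda>s. f (\<gamma> s)) integrable_on {0..t} \<and> \<gamma> t = x0 + integral {0..t} (\<lambda>s. f (\<gamma> s))"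
    if t: "t \<ge> 0" for t
  proof -
    have conv: "(\<lambda>k. f (picard f x0 k s)) \<longlonglongrightarrow> f (\<gamma> s)" if "s \<in> {0..t}" for s
      using that cf lim[of s] by (intro isCont_tendsto_compose[of _ f]) (auto simp: continuous_on_eq_continuous_at)
    note dc = dominated_convergence[of "\<lambda>k s. f (picard f x0 k s)" "{0..t}" "\<lambda>_. M" "\<lambda>s. f (\<gamma> s)",
        OF picard_int[OF cf] integrable_const_ivl bnd conv]
    have "(\<lambda>k. picard f x0 (Suc k) t) \<longlonglongrightarrow> x0 + integral {0..t} (\<lambda>s. f (\<gamma> s))"
      unfolding picard.simps by (intro tendsto_intros dc(2))
    moreover have "(\<lambda>k. picard f x0 (Suc k) t) \<longlonglongrightarrow> \<gamma> t"
      using LIMSEQ_Suc[OF lim[OF t]] .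
    ultimately show ?thesis using dc(1) LIMSEQ_unique by blast
  qed
  have diffb: "norm (\<gamma> t - \<gamma> s) \<le> M * (t - s)" if "0 \<le> s" "s \<le> t" for s t
  proof -
    have it: "(\<lambda>s. f (\<gamma> s)) integrable_on {0..t}" using eqn that by auto
    have "integral {0..s} (\<lambda>s. f (\<gamma> s)) + integral {s..t} (\<lambda>s. f (\<gamma> s)) = integral {0..t} (\<lambda>s. f (\<gamma> s))"
      by (rule Henstock_Kurzweil_Integration.integral_combine[OF that it])
    then have "\<gamma> t - \<gamma> s = integral {s..t} (\<lambda>s. f (\<gamma> s))"
      using eqn[of s] eqn[of t] that by (auto simp: algebra_simps)
    also have "norm \<dots> \<le> integral {s..t} (\<lambda>_. M)"
      by (rule integral_norm_bound_integral[OF integrable_subinterval_real[OF it]]) (use that bnd in auto)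
    finally show ?thesis using that by (simp add: mult.commute)
  qed
  have "M-lipschitz_on {0..} \<gamma>"
  proof (rule lipschitz_onI[OF _ M])
    fix s t :: real assume "s \<in> {0..}" "t \<in> {0..}"
    then show "dist (\<gamma> s) (\<gamma> t) \<le> M * dist s t"
      using diffb[of s t] diffb[of t s]
      by (cases "s \<le> t") (auto simp: dist_norm norm_minus_commute abs_if)
  qed
  then have cg: "continuous_on {0..} \<gamma>" by (rule lipschitz_on_continuous_on)
  have cfg: "continuous_on {0..} (\<lambda>s. f (\<gamma> s))"
    using continuous_on_compose2[OF cf cg] by auto
  have "(\<gamma> has_vector_derivative f (\<gamma> t)) (at t within {0..})" if t: "t \<ge> 0" for t
  proof -
    have d: "((\<lambda>u. integral {0..u} (\<lambda>s. f (\<gamma> s))) has_vector_derivative f (\<gamma> t)) (at t within {0..t+1})"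
      using integral_has_vector_derivative[OF continuous_on_subset[OF cfg], of 0 "t+1" t] t by auto
    have "((\<lambda>u. x0 + integral {0..u} (\<lambda>s. f (\<gamma> s))) has_vector_derivative f (\<gamma> t)) (at t within {0..t+1})"
      using has_vector_derivative_add[OF has_vector_derivative_const d] by simp
    then have "(\<gamma> has_vector_derivative f (\<gamma> t)) (at t within {0..t+1})"
      by (rule has_vector_derivative_transform[rotated 2]) (use t eqn in auto)
    moreover have "at t within {0..t+1} = at t within {0..}"
      by (rule at_within_nhd[of _ "{t-1<..<t+1}"]) auto
    ultimately show ?thesis by simp
  qed
  then show ?thesis using g0 by blast
qed

lemma ode_exists:
  fixes f :: "'a::euclidean_space \<Rightarrow> 'a"
  assumes lip: "\<And>x y. norm (f x - f y) \<le> L * norm (x - y)" and L: "L > 0"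
    and bnd: "\<And>x. norm (f x) \<le> M"
  shows "\<exists>\<gamma>. \<gamma> 0 = x0 \<and> (\<forall>s. (\<gamma> has_vector_derivative f (\<gamma> s)) (at s))"
proof -
  obtain \<gamma>1 where g1: "\<gamma>1 0 = x0" "\<And>t. t \<ge> 0 \<Longrightarrow> (\<gamma>1 has_vector_derivative f (\<gamma>1 t)) (at t within {0..})"
    using ode_forward[OF lip L bnd] by blast
  have lip2: "norm ((- f x) - (- f y)) \<le> L * norm (x - y)" for x y
    using lip[of x y] by (simp add: norm_minus_commute)
  obtain \<gamma>2 where g2: "\<gamma>2 0 = x0" "\<And>t. t \<ge> 0 \<Longrightarrow> (\<gamma>2 has_vector_derivative - f (\<gamma>2 t)) (at t within {0..})"
    using ode_forward[of "\<lambda>x. - f x", OF lip2 L, of M x0] bnd by auto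
  define \<gamma> where "\<gamma> t = (if t \<in> {0..} then \<gamma>1 t else \<gamma>2 (- t))" for t
  have "(\<gamma> has_vector_derivative f (\<gamma> s)) (at s)" for s
  proof -
    have "((\<lambda>t. if t \<in> {0..} then \<gamma>1 t else (\<lambda>t. \<gamma>2 (- t)) t) has_vector_derivative
       (if s \<in> {0..} then (\<lambda>t. f (\<gamma>1 t)) s else (\<lambda>t. f (\<gamma>2 (- t))) s)) (at s within UNIV)"
    proof (rule has_vector_derivative_If_within_closures[where T = "{..<0}"])
      show "s \<in> {0..} \<union> {..<0}" by auto
      show "UNIV = {0..} \<union> {..<(0::real)}" by auto
      show "s \<in> {0..} \<union> closure {0..} \<inter> closure {..<0} \<Longrightarrow>
        (\<gamma>1 has_vector_derivative f (\<gamma>1 s)) (at s within {0..} \<union> closure {0..} \<inter> closure {..<0})"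
        using g1(2)[of s] by (auto simp: closure_closed)
      show "s \<in> {..<0} \<union> closure {0..} \<inter> closure {..<0} \<Longrightarrow>
        ((\<lambda>t. \<gamma>2 (- t)) has_vector_derivative f (\<gamma>2 (- s))) (at s within {..<0} \<union> closure {0..} \<inter> closure {..<0})"
      proof -
        assume "s \<in> {..<0} \<union> closure {0..} \<inter> closure {..<0}"
        then have s: "s \<le> 0" by (auto simp: closure_closed)
        have e: "{..<0} \<union> closure {0..} \<inter> closure {..<0} = {..(0::real)}" by (auto simp: closure_closed)
        have im: "uminus ` {..(0::real)} = {0..}" by (auto intro: image_eqI[of _ _ "- _"])
        have d1: "(uminus has_vector_derivative (-1)) (at s within {..0})"
          by (auto simp: has_real_derivative_iff_has_vector_derivative[symmetric] intro!: derivative_eq_intros)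
        have d2: "(\<gamma>2 has_vector_derivative - f (\<gamma>2 (- s))) (at (- s) within uminus ` {..0})"
          unfolding im using g2(2)[of "- s"] s by auto
        show ?thesis unfolding e using vector_diff_chain_within[OF d1 d2] by (simp add: o_def)
      qed
    qed (auto simp: closure_closed g1 g2)
    then show ?thesis unfolding \<gamma>_def[abs_def] by (simp add: if_distrib)
  qed
  moreover have "\<gamma> 0 = x0" using g1 by (simp add: \<gamma>_def)
  ultimately show ?thesis by blast
qed

lemma ode_unique:
  fixes f :: "'a::euclidean_space \<Rightarrow> 'a"
  assumes lip: "\<And>x y. norm (f x - f y) \<le> L * norm (x - y)" and L: "L \<ge> 0"
    and d1: "\<And>s. (\<gamma>1 has_vector_derivative f (\<gamma>1 s)) (at s)"
    and d2: "\<And>s. (\<gamma>2 has_vector_derivative f (\<gamma>2 s)) (at s)"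
    and i: "\<gamma>1 0 = \<gamma>2 0"
  shows "\<gamma>1 t = \<gamma>2 t"
proof -
  define \<delta> where "\<delta> s = \<gamma>1 s - \<gamma>2 s" for s
  define w where "w s = f (\<gamma>1 s) - f (\<gamma>2 s)" for s
  define n where "n s = \<delta> s \<bullet> \<delta> s" for s
  define D where "D s = 2 * (\<delta> s \<bullet> w s)" for s
  have d\<delta>: "(\<delta> has_vector_derivative w s) (at s)" for s
    unfolding \<delta>_def w_def by (intro has_vector_derivative_diff d1 d2)
  have dn: "(n has_real_derivative D s) (at s)" for s
  proof -
    have "(n has_derivative (\<lambda>h. \<delta> s \<bullet> (h *\<^sub>R w s) + (h *\<^sub>R w s) \<bullet> \<delta> s)) (at s)"
      unfolding n_def[abs_def] using d\<delta>[of s, unfolded has_vector_derivative_def]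
      by (intro has_derivative_inner) auto
    then show ?thesis unfolding has_field_derivative_def
      by (rule has_derivative_eq_rhs) (auto simp: D_def inner_commute algebra_simps fun_eq_iff)
  qed
  have nn: "n s \<ge> 0" for s unfolding n_def by simp
  have n0: "n 0 = 0" unfolding n_def \<delta>_def using i by simp
  have Db: "\<bar>D s\<bar> \<le> 2 * L * n s" for s
  proof -
    have "\<bar>\<delta> s \<bullet> w s\<bar> \<le> norm (\<delta> s) * norm (w s)" by (rule Cauchy_Schwarz_ineq2)
    also have "\<dots> \<le> norm (\<delta> s) * (L * norm (\<delta> s))"
      unfolding w_def \<delta>_def by (intro mult_left_mono lip) auto
    also have "\<dots> = L * n s" unfolding n_def by (simp add: power2_norm_eq_inner[symmetric] power2_eq_square)
    finally show ?thesis unfolding D_def by simp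
  qed
  have "n t \<le> 0"
  proof (cases "t \<ge> 0")
    case True
    let ?g = "\<lambda>s. - (exp (- (2 * L * s)) * n s)"
    have "?g 0 \<le> ?g t"
    proof (rule deriv_nonneg_imp_mono[of 0 t ?g "\<lambda>s. exp (- (2 * L * s)) * (2*L*n s - D s)"])
      fix s assume "s \<in> {0..t}"
      show "(?g has_real_derivative exp (- (2 * L * s)) * (2*L*n s - D s)) (at s)"
        by (rule derivative_eq_intros dn refl | simp add: algebra_simps)+
      show "exp (- (2 * L * s)) * (2*L*n s - D s) \<ge> 0" using Db[of s] by (intro mult_nonneg_nonneg) auto
    qed (use True in auto)
    then have "exp (- (2 * L * t)) * n t \<le> 0" using n0 by simp
    then show ?thesis by (simp add: mult_le_0_iff)
  next
    case False
    let ?g = "\<lambda>s. exp (2 * L * s) * n s"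
    have "?g t \<le> ?g 0"
    proof (rule deriv_nonneg_imp_mono[of t 0 ?g "\<lambda>s. exp (2 * L * s) * (2*L*n s + D s)"])
      fix s assume "s \<in> {t..0}"
      show "(?g has_real_derivative exp (2 * L * s) * (2*L*n s + D s)) (at s)"
        by (rule derivative_eq_intros dn refl | simp add: algebra_simps)+
      show "exp (2 * L * s) * (2*L*n s + D s) \<ge> 0" using Db[of s] by (intro mult_nonneg_nonneg) auto
    qed (use False in auto)
    then have "exp (2 * L * t) * n t \<le> 0" using n0 by simp
    then show ?thesis by (simp add: mult_le_0_iff)
  qed
  then have "n t = 0" using nn[of t] by linarith
  then show ?thesis unfolding n_def \<delta>_def by simp
qed



lemma V0_lip:
  fixes v :: "'a::euclidean_space \<Rightarrow> 'a"
  assumes "v \<in> V0 E"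
  shows "\<exists>L>0. \<exists>M. (\<forall>x y. norm (v x - v y) \<le> L * norm (x - y)) \<and> (\<forall>x. norm (v x) \<le> M)"
proof -
  define K where "K = closure {x. v x \<noteq> 0}"
  have sm: "smooth_fun v" and K: "compact K" using assms by (auto simp: V0_def K_def)
  have dif: "iter_dderiv v us differentiable (at x)" for us x using sm by (auto simp: smooth_fun_def)
  have cv: "continuous_on UNIV v"
  proof (rule continuous_at_imp_continuous_on, rule ballI)
    fix x :: 'a show "isCont v x" using dif[of "[]" x] by (simp add: differentiable_imp_continuous_within)
  qed
  have sub: "{x. v x \<noteq> 0} \<subseteq> K" unfolding K_def by (rule closure_subset)
  have vK: "v x = 0" if "x \<notin> K" for x
    using sub that by auto
  obtain B where B: "\<And>y. y \<in> v ` K \<Longrightarrow> norm y \<le> B"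
  proof -
    have "bounded (v ` K)" by (rule compact_imp_bounded[OF compact_continuous_image[OF continuous_on_subset[OF cv] K]]) simp
    then show ?thesis using that unfolding bounded_iff by blast
  qed
  have bndv: "norm (v x) \<le> max B 0" for x
  proof (cases "x \<in> K")
    case True then show ?thesis using B[of "v x"] by force
  qed (simp add: vK)
  define D where "D x = frechet_derivative v (at x)" for x
  have hd: "(v has_derivative D x) (at x)" for x
    using dif[of "[]" x] unfolding D_def by (simp add: frechet_derivative_works)
  have cD: "continuous_on UNIV (\<lambda>x. D x b)" for b
    using dif[of "[b]"] unfolding D_def
    by (auto intro!: continuous_at_imp_continuous_on differentiable_imp_continuous_within)
  have D0: "D x = (\<lambda>h. 0)" if "x \<notin> K" for x
  proof -
    have "open (- K)" using compact_imp_closed[OF K] by auto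
    have "((\<lambda>x. 0) has_derivative (\<lambda>h. 0)) (at x)" by simp
    then have "(v has_derivative (\<lambda>h. 0)) (at x)"
      by (rule has_derivative_transform_within_open[OF _ \<open>open (- K)\<close>]) (use that vK in auto)
    then show ?thesis using has_derivative_unique[OF hd] by blast
  qed
  have bK: "bounded ((\<lambda>x. D x b) ` K)" for b
    by (rule compact_imp_bounded[OF compact_continuous_image[OF continuous_on_subset[OF cD] K]]) simp
  have "bounded (\<Union>b\<in>Basis. (\<lambda>x. D x b) ` K)"
    by (rule bounded_UN) (simp_all add: bK)
  then obtain C where C: "\<And>y. y \<in> (\<Union>b\<in>Basis. (\<lambda>x. D x b) ` K) \<Longrightarrow> norm y \<le> C"
    unfolding bounded_iff by blast
  have Cb: "norm (D x b) \<le> max C 0" if b: "b \<in> Basis" for x b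
  proof (cases "x \<in> K")
    case True
    then have "D x b \<in> (\<Union>b\<in>Basis. (\<lambda>x. D x b) ` K)" using b by blast
    then show ?thesis using C by force
  next
    case False then show ?thesis using D0[of x] by simp
  qed
  have on: "onorm (D x) \<le> real DIM('a) * max C 0" for x
  proof (rule onorm_le)
    fix h :: 'a
    have lin: "linear (D x)" using hd[of x] by (auto dest: has_derivative_bounded_linear bounded_linear.linear)
    have "D x h = D x (\<Sum>b\<in>Basis. (h \<bullet> b) *\<^sub>R b)" by (simp add: euclidean_representation)
    also have "\<dots> = (\<Sum>b\<in>Basis. (h \<bullet> b) *\<^sub>R D x b)" using lin by (simp add: linear_sum linear_scale)
    finally have "norm (D x h) \<le> (\<Sum>b\<in>Basis. norm ((h \<bullet> b) *\<^sub>R D x b))" by (simp only: norm_sum)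
    also have "\<dots> \<le> (\<Sum>b\<in>(Basis::'a set). norm h * max C 0)"
    proof (rule sum_mono)
      fix b :: 'a assume b: "b \<in> Basis"
      have "\<bar>h \<bullet> b\<bar> \<le> norm h" using b by (rule Basis_le_norm)
      then show "norm ((h \<bullet> b) *\<^sub>R D x b) \<le> norm h * max C 0"
        using Cb[OF b, of x] by (simp add: mult_mono)
    qed
    finally show "norm (D x h) \<le> real DIM('a) * max C 0 * norm h" by (simp add: ac_simps)
  qed
  have lip: "norm (v x - v y) \<le> real DIM('a) * max C 0 * norm (x - y)" for x y
    by (rule differentiable_bound[where S=UNIV and f'=D]) (simp_all add: hd on)
  have lip2: "norm (v x - v y) \<le> (real DIM('a) * max C 0 + 1) * norm (x - y)" for x y
  proof -
    have "real DIM('a) * max C 0 * norm (x - y) \<le> (real DIM('a) * max C 0 + 1) * norm (x - y)"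
      by (rule mult_right_mono) auto
    then show ?thesis using lip[of x y] by linarith
  qed
  have pos: "real DIM('a) * max C 0 + 1 > 0" by (simp add: add_nonneg_pos)
  show ?thesis using lip2 bndv pos by blast
qed

context
  fixes v :: "'a::euclidean_space \<Rightarrow> 'a" and L M :: real
  assumes lipv: "\<And>x y. norm (v x - v y) \<le> L * norm (x - y)" and Lpos: "L > 0"
    and bndv: "\<And>x. norm (v x) \<le> M"
begin

lemma flow_sol:
  assumes g0: "\<gamma> 0 = x" and gd: "\<And>s. (\<gamma> has_vector_derivative v (\<gamma> s)) (at s)"
  shows "flow v t x = \<gamma> t"
proof -
  have "(THE \<gamma>. \<gamma> 0 = x \<and> (\<forall>s. (\<gamma> has_vector_derivative v (\<gamma> s)) (at s))) = \<gamma>"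
  proof (rule the_equality)
    show "\<gamma> 0 = x \<and> (\<forall>s. (\<gamma> has_vector_derivative v (\<gamma> s)) (at s))" using g0 gd by auto
    fix \<gamma>' assume h: "\<gamma>' 0 = x \<and> (\<forall>s. (\<gamma>' has_vector_derivative v (\<gamma>' s)) (at s))"
    show "\<gamma>' = \<gamma>"
    proof
      fix t show "\<gamma>' t = \<gamma> t"
        by (rule ode_unique[OF lipv _ _ gd]) (use h g0 Lpos in auto)
    qed
  qed
  then show ?thesis unfolding flow_def by simp
qed

lemma flow_solves:
  shows "flow v 0 x = x" and "\<And>s. ((\<lambda>t. flow v t x) has_vector_derivative v (flow v s x)) (at s)"
proof -
  obtain \<gamma> where g: "\<gamma> 0 = x" "\<And>s. (\<gamma> has_vector_derivative v (\<gamma> s)) (at s)"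
    using ode_exists[OF lipv Lpos bndv] by blast
  have e: "(\<lambda>t. flow v t x) = \<gamma>" using flow_sol[OF g] by auto
  show "flow v 0 x = x" using g e by metis
  show "((\<lambda>t. flow v t x) has_vector_derivative v (flow v s x)) (at s)" for s
    unfolding e using g(2)[of s] e by metis
qed

lemma flow_add: "flow v (t + s) x = flow v s (flow v t x)"
proof -
  have "flow v s (flow v t x) = (\<lambda>s. flow v (t + s) x) s"
  proof (rule flow_sol)
    show "flow v (t + 0) x = flow v t x" by simp
    fix s
    have d1: "((\<lambda>s. t + s) has_vector_derivative 1) (at s)"
      by (auto simp: has_real_derivative_iff_has_vector_derivative[symmetric] intro!: derivative_eq_intros)
    have "(((\<lambda>t. flow v t x) \<circ> (\<lambda>s. t + s)) has_vector_derivative (1 *\<^sub>R v (flow v (t + s) x))) (at s)"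
      by (rule vector_diff_chain_at[OF d1 flow_solves(2)])
    then show "((\<lambda>s. flow v (t + s) x) has_vector_derivative v (flow v (t + s) x)) (at s)"
      by (simp add: o_def)
  qed
  then show ?thesis by simp
qed

lemma flow_inv: "flow v (- t) (flow v t x) = x"
  using flow_add[of t "- t" x] flow_solves(1) by simp

lemma flow_inj: "inj (flow v t)"
  by (metis flow_inv injI)

lemma flow_fix:
  assumes "v y = 0" shows "flow v t y = y"
  using flow_sol[of "\<lambda>_. y" y t] assms by auto

end



lemma pow_le_exp_fact: "real n ^ n \<le> exp (real n) * fact n"
proof -
  have "(\<lambda>k. real n ^ k /\<^sub>R fact k) sums exp (real n)" by (rule exp_converges)
  then have s: "summable (\<lambda>k. real n ^ k /\<^sub>R fact k)" and e: "exp (real n) = (\<Sum>k. real n ^ k /\<^sub>R fact k)"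
    by (auto simp: sums_iff)
  have "sum (\<lambda>k. real n ^ k /\<^sub>R fact k) {n} \<le> (\<Sum>k. real n ^ k /\<^sub>R fact k)"
    by (rule sum_le_suminf[OF s]) auto
  then have "real n ^ n / fact n \<le> exp (real n)" using e by (simp add: divide_inverse mult.commute)
  then show ?thesis by (simp add: divide_le_eq mult.commute)
qed

lemma summable_sqrtfact:
  assumes y: "y \<ge> 0"
  shows "summable (\<lambda>n. y ^ n / sqrt (fact n))"
proof (rule summable_ratio_test[of "1/2" "nat \<lceil>4 * y^2\<rceil>"])
  fix n assume n: "n \<ge> nat \<lceil>4 * y^2\<rceil>"
  have "4 * y^2 \<le> real (Suc n)" using n by linarith
  then have "sqrt (4 * y^2) \<le> sqrt (real (Suc n))" by (rule real_sqrt_le_mono)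
  then have yy: "2 * y \<le> sqrt (real (Suc n))" using y by (simp add: real_sqrt_mult)
  have sp: "sqrt (real (Suc n)) > 0" by simp
  have fp: "sqrt (fact n) > 0" by simp
  have "y ^ Suc n / sqrt (fact (Suc n)) = (y ^ n / sqrt (fact n)) * (y / sqrt (real (Suc n)))"
  proof -
    have "sqrt (fact (Suc n)) = sqrt (real (Suc n)) * sqrt (fact n)"
      by (simp only: fact_Suc of_nat_mult real_sqrt_mult)
    then show ?thesis using sp fp by (simp add: field_simps)
  qed
  also have "\<dots> \<le> (y ^ n / sqrt (fact n)) * (1/2)"
    using yy sp y by (intro mult_left_mono) (auto simp: divide_simps)
  finally show "norm (y ^ Suc n / sqrt (fact (Suc n))) \<le> 1 / 2 * norm (y ^ n / sqrt (fact n))"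
    using y by (simp add: abs_of_nonneg)
qed simp

lemma summable_u:
  fixes c x :: real assumes c: "c \<ge> 0"
  shows "summable (\<lambda>n. c * sqrt (real n) ^ n / fact n * \<bar>x\<bar> ^ n)"
proof (rule summable_comparison_test[OF _ summable_mult[OF summable_sqrtfact[of "sqrt (exp 1) * \<bar>x\<bar>"], of c]])
  show "\<exists>N. \<forall>n\<ge>N. norm (c * sqrt (real n) ^ n / fact n * \<bar>x\<bar> ^ n) \<le> c * ((sqrt (exp 1) * \<bar>x\<bar>) ^ n / sqrt (fact n))"
  proof (intro exI allI impI)
    fix n :: nat
    have "sqrt (real n) ^ n = sqrt (real n ^ n)" by (simp add: real_sqrt_power)
    also have "\<dots> \<le> sqrt (exp (real n) * fact n)" by (rule real_sqrt_le_mono[OF pow_le_exp_fact])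
    also have "\<dots> = sqrt (exp 1) ^ n * sqrt (fact n)"
      by (simp add: real_sqrt_mult real_sqrt_power[symmetric] exp_of_nat_mult[symmetric])
    finally have b: "sqrt (real n) ^ n \<le> sqrt (exp 1) ^ n * sqrt (fact n)" .
    have fp: "sqrt (fact n) > 0" by simp
    have ff: "fact n = sqrt (fact n) * sqrt (fact n)" by simp
    have "sqrt (real n) ^ n / fact n \<le> sqrt (exp 1) ^ n / sqrt (fact n)"
    proof -
      have "sqrt (fact n) * sqrt (real n) ^ n \<le> sqrt (fact n) * (sqrt (exp 1) ^ n * sqrt (fact n))"
        using b fp by (intro mult_left_mono) auto
      also have "\<dots> = fact n * sqrt (exp 1) ^ n" by (subst (2) ff) (simp add: ac_simps)
      finally show ?thesis using fp by (simp add: divide_simps ac_simps)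
    qed
    then have "c * sqrt (real n) ^ n / fact n * \<bar>x\<bar> ^ n \<le> c * (sqrt (exp 1) ^ n / sqrt (fact n)) * \<bar>x\<bar> ^ n"
      using c by (simp add: mult_left_mono mult_right_mono times_divide_eq_right[symmetric] del: times_divide_eq_right)
    then show "norm (c * sqrt (real n) ^ n / fact n * \<bar>x\<bar> ^ n) \<le> c * ((sqrt (exp 1) * \<bar>x\<bar>) ^ n / sqrt (fact n))"
      using c by (simp add: power_mult_distrib abs_of_nonneg field_simps)
  qed
qed simp



theorem mainTheorem9:
  fixes E :: "'a::euclidean_space set" and J :: "'a \<Rightarrow> 'a \<Rightarrow> real"
  assumes E_domain: "open E" "connected E" "E \<noteq> {}"
    and J_sym: "\<forall>x y. J x y = J y x"
    and hyp: "H3 E J"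
  shows "\<forall>v\<in>V0 E. \<exists>u :: nat \<Rightarrow> real.
           (\<forall>n. u n \<ge> 0) \<and> (\<forall>x::real. summable (\<lambda>n. u n / fact n * \<bar>x\<bar> ^ n)) \<and>
           (\<forall>\<xi>. finite \<xi> \<and> \<xi> \<subseteq> E \<longrightarrow>
              (\<forall>t. (\<lambda>s. Hfun J v \<xi> s) differentiable (at t)) \<and>
              (\<forall>T>0. \<forall>t. \<bar>t\<bar> \<le> T \<longrightarrow>
                 \<bar>deriv (\<lambda>s. Hfun J v \<xi> s) t\<bar> \<le> u (card \<xi>) / detJ J \<xi>))"
proof (intro ballI)
  fix v assume vV: "v \<in> V0 E"
  obtain L M where "L > 0" "\<forall>x y. norm (v x - v y) \<le> L * norm (x - y)" "\<forall>x. norm (v x) \<le> M"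
    using V0_lip[OF vV] by blast
  then have lipv: "\<And>x y. norm (v x - v y) \<le> L * norm (x - y)" and Lpos: "L > 0"
    and bndv: "\<And>x. norm (v x) \<le> M" by auto
  note fl = flow_inv[OF lipv Lpos bndv] flow_inj[OF lipv Lpos bndv] flow_fix[OF lipv Lpos bndv]
    flow_add[OF lipv Lpos bndv] flow_solves(1)[OF lipv Lpos bndv]
  have h1: "\<forall>\<xi>. finite \<xi> \<and> \<xi> \<subseteq> E \<longrightarrow> detJ J \<xi> > 0"
    and h2: "\<forall>v\<in>V0 E. \<forall>\<xi>. finite \<xi> \<and> \<xi> \<subseteq> E \<longrightarrow>
        (\<lambda>t. Upot J (flow_conf v t \<xi>)) differentiable (at 0)"
    and h3: "\<forall>v\<in>V0 E. \<exists>c>0. \<forall>\<xi>. finite \<xi> \<and> \<xi> \<subseteq> E \<longrightarrow>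
        \<bar>gradU J v \<xi>\<bar> \<le> c * sqrt (real (card \<xi>)) ^ card \<xi> / detJ J \<xi>"
    using hyp unfolding H3_def by (fact conjunct1 | fact conjunct2[THEN conjunct1] | fact conjunct2[THEN conjunct2])+
  have pos: "\<And>\<xi>. finite \<xi> \<Longrightarrow> \<xi> \<subseteq> E \<Longrightarrow> detJ J \<xi> > 0"
    using h1 by simp
  have dU: "\<And>\<xi>. finite \<xi> \<Longrightarrow> \<xi> \<subseteq> E \<Longrightarrow> (\<lambda>t. Upot J (flow_conf v t \<xi>)) differentiable (at 0)"
    using bspec[OF h2 vV] by simp
  obtain c where c: "c > 0" and cb0: "\<forall>\<xi>. finite \<xi> \<and> \<xi> \<subseteq> E \<longrightarrow>
      \<bar>gradU J v \<xi>\<bar> \<le> c * sqrt (real (card \<xi>)) ^ card \<xi> / detJ J \<xi>"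
    using bspec[OF h3 vV] by (elim exE conjE)
  have cb: "\<And>\<xi>. finite \<xi> \<Longrightarrow> \<xi> \<subseteq> E \<Longrightarrow>
      \<bar>gradU J v \<xi>\<bar> \<le> c * sqrt (real (card \<xi>)) ^ card \<xi> / detJ J \<xi>"
    using cb0 by simp
  have vE: "v y = 0" if "y \<notin> E" for y
  proof -
    have "{x. v x \<noteq> 0} \<subseteq> closure {x. v x \<noteq> 0}" by (rule closure_subset)
    moreover have "closure {x. v x \<noteq> 0} \<subseteq> E" using vV unfolding V0_def by simp
    ultimately have "{x. v x \<noteq> 0} \<subseteq> E" by (rule order_trans)
    then show ?thesis using that by auto
  qed
  have flowE: "flow v t x \<in> E" if "x \<in> E" for t x
  proof (rule ccontr)
    assume nE: "flow v t x \<notin> E"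
    have "flow v (- t) (flow v t x) = flow v t x" by (rule fl(3)[OF vE[OF nE]])
    then show False using fl(1)[of t x] nE that by simp
  qed
  have confE: "flow_conf v t \<xi> \<subseteq> E" "finite (flow_conf v t \<xi>)" "card (flow_conf v t \<xi>) = card \<xi>"
    if "finite \<xi>" "\<xi> \<subseteq> E" for t \<xi>
  proof -
    show "flow_conf v t \<xi> \<subseteq> E" using that flowE unfolding flow_conf_def by auto
    show "finite (flow_conf v t \<xi>)" using that unfolding flow_conf_def by simp
    have "inj_on (flow v t) \<xi>" using fl(2)[of t] by (simp add: inj_on_def inj_def)
    then show "card (flow_conf v t \<xi>) = card \<xi>" unfolding flow_conf_def by (rule card_image)
  qed
  define u where "u n = c * sqrt (real n) ^ n" for n
  have key: "(Hfun J v \<xi> has_real_derivative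
      (- detJ J (flow_conf v t \<xi>) * gradU J v (flow_conf v t \<xi>) / detJ J \<xi>)) (at t)
     \<and> \<bar>- detJ J (flow_conf v t \<xi>) * gradU J v (flow_conf v t \<xi>) / detJ J \<xi>\<bar> \<le> u (card \<xi>) / detJ J \<xi>"
    if \<xi>: "finite \<xi>" "\<xi> \<subseteq> E" for \<xi> t
  proof -
    define \<eta> where "\<eta> = flow_conf v t \<xi>"
    have \<eta>: "finite \<eta>" "\<eta> \<subseteq> E" "card \<eta> = card \<xi>" using confE[OF \<xi>] unfolding \<eta>_def by auto
    define g where "g h = Upot J (flow_conf v h \<eta>)" for h
    have shift: "flow_conf v s \<xi> = flow_conf v (s - t) \<eta>" for s
    proof -
      have "flow v s x = flow v (s - t) (flow v t x)" for x using fl(4)[of t "s - t" x] by simp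
      then show ?thesis unfolding \<eta>_def flow_conf_def by (auto simp: image_image)
    qed
    have dpos: "detJ J (flow_conf v h \<eta>) > 0" for h using confE[OF \<eta>(1,2)] pos by auto
    have Dxi: "detJ J \<xi> > 0" using pos \<xi> by auto
    have H: "Hfun J v \<xi> = (\<lambda>s. exp (- g (s - t)) / detJ J \<xi>)"
      by (rule ext) (simp add: Hfun_def g_def Upot_def shift dpos)
    have gd: "(g has_real_derivative deriv g 0) (at 0)"
      using dU[OF \<eta>(1,2)] unfolding g_def[abs_def] by (simp add: DERIV_deriv_iff_real_differentiable)
    have gd2: "((\<lambda>s. g (s - t)) has_real_derivative deriv g 0) (at t)"
      using DERIV_shift[of g "deriv g 0" t "- t"] gd by simp
    have c0: "flow_conf v 0 \<eta> = \<eta>" unfolding flow_conf_def using fl(5) by simp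
    have g0: "exp (- g 0) = detJ J \<eta>" using dpos[of 0] by (simp add: g_def Upot_def c0)
    have gg: "deriv g 0 = gradU J v \<eta>" unfolding gradU_def g_def[abs_def] ..
    have "(Hfun J v \<xi> has_real_derivative (- detJ J \<eta> * gradU J v \<eta> / detJ J \<xi>)) (at t)"
    proof -
      have "((\<lambda>s. exp (- g (s - t)) / detJ J \<xi>) has_real_derivative
          (exp (- g (t - t)) * (- deriv g 0) / detJ J \<xi>)) (at t)"
      proof -
        have d1: "((\<lambda>s. - g (s - t)) has_real_derivative - deriv g 0) (at t)" using DERIV_minus[OF gd2] .
        show ?thesis using DERIV_cdivide[OF DERIV_fun_exp[OF d1], of "detJ J \<xi>"] by simp
      qed
      then show ?thesis unfolding H using g0 gg by simp
    qed
    moreover have "\<bar>- detJ J \<eta> * gradU J v \<eta> / detJ J \<xi>\<bar> \<le> u (card \<xi>) / detJ J \<xi>"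
    proof -
      have "\<bar>- detJ J \<eta> * gradU J v \<eta>\<bar> = detJ J \<eta> * \<bar>gradU J v \<eta>\<bar>"
        using dpos[of 0] c0 by (simp add: abs_mult)
      also have "\<dots> \<le> detJ J \<eta> * (c * sqrt (real (card \<eta>)) ^ card \<eta> / detJ J \<eta>)"
        using cb[OF \<eta>(1,2)] dpos[of 0] c0 by (intro mult_left_mono) auto
      also have "\<dots> = u (card \<xi>)" using dpos[of 0] c0 \<eta>(3) by (simp add: u_def)
      finally show ?thesis using Dxi by (simp add: divide_right_mono)
    qed
    ultimately show ?thesis unfolding \<eta>_def by blast
  qed
  show "\<exists>u :: nat \<Rightarrow> real.
           (\<forall>n. u n \<ge> 0) \<and> (\<forall>x::real. summable (\<lambda>n. u n / fact n * \<bar>x\<bar> ^ n)) \<and>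
           (\<forall>\<xi>. finite \<xi> \<and> \<xi> \<subseteq> E \<longrightarrow>
              (\<forall>t. (\<lambda>s. Hfun J v \<xi> s) differentiable (at t)) \<and>
              (\<forall>T>0. \<forall>t. \<bar>t\<bar> \<le> T \<longrightarrow>
                 \<bar>deriv (\<lambda>s. Hfun J v \<xi> s) t\<bar> \<le> u (card \<xi>) / detJ J \<xi>))"
  proof (intro exI[of _ u] conjI allI impI)
    show "u n \<ge> 0" for n using c by (simp add: u_def)
    show "summable (\<lambda>n. u n / fact n * \<bar>x\<bar> ^ n)" for x
      using summable_u[of c x] c by (simp add: u_def)
    fix \<xi> :: "'a set" assume \<xi>: "finite \<xi> \<and> \<xi> \<subseteq> E"
    show "(\<lambda>s. Hfun J v \<xi> s) differentiable (at t)" for t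
      using key[of \<xi> t] \<xi> by (auto simp: real_differentiable_def)
    fix T t :: real assume "T > 0" "\<bar>t\<bar> \<le> T"
    show "\<bar>deriv (\<lambda>s. Hfun J v \<xi> s) t\<bar> \<le> u (card \<xi>) / detJ J \<xi>"
      using key[of \<xi> t] \<xi> DERIV_imp_deriv by (metis (no_types, lifting))
  qed
qed

end
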